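(* Let $\Omega\subset\mathbb{R}^n$ be a domain that is star-shaped with respect to a point $x^*\in\Omega$, and let $g\in C(\Omega)$. Define $u:\Omega\to\mathbb{R}$ by \[ u(x)=\max\{ g(y) \mid y = x^* + t(x-x^* )\in\Omega,\ t\in[0,1]\}. \] Then $u$ is star-shaped with respect to $x^*$ and $u=SS^+(g)$.
   Context: A set $S\subset\mathbb{R}^n$ is star-shaped with respect to $x^*$ if $x\in S$ implies $tx^*+(1-t)x\in S$ for all $t\in[0,1]$. A function $v:\Omega\to\mathbb{R}$ is star-shaped with respect to $x^*$ if each sublevel set $\{x\in\Omega: v(x)\le\alpha\}$, $\alpha\in\mathbb{R}$, is star-shaped with respect to $x^*$. The upper star-shaped envelope of $g$ with respect to $x^*$ is $SS^+(g)(x)=\inf\{v(x) \mid v:\Omega\to\mathbb{R} \text{ star-shaped with respect to } x^*,\ v\ge g \text{ on } \Omega\}$. *)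

theory Defs
  imports "HOL-Analysis.Analysis"
begin

definition star_shaped_set :: "'a::real_vector set \<Rightarrow> 'a \<Rightarrow> bool" where
  "star_shaped_set S xs \<longleftrightarrow>
     (\<forall>x\<in>S. \<forall>t\<in>{0..1::real}. t *\<^sub>R xs + (1 - t) *\<^sub>R x \<in> S)"

definition star_shaped_fun :: "'a::real_vector set \<Rightarrow> 'a \<Rightarrow> ('a \<Rightarrow> real) \<Rightarrow> bool" where
  "star_shaped_fun \<Omega> xs v \<longleftrightarrow>
     (\<forall>\<alpha>::real. star_shaped_set {x\<in>\<Omega>. v x \<le> \<alpha>} xs)"

definition upper_ss_envelope :: "'a::real_vector set \<Rightarrow> 'a \<Rightarrow> ('a \<Rightarrow> real) \<Rightarrow> 'a \<Rightarrow> real" where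
  "upper_ss_envelope \<Omega> xs g x =
     Inf {v x | v. star_shaped_fun \<Omega> xs v \<and> (\<forall>y\<in>\<Omega>. g y \<le> v y)}"

end

theory Submission
  imports Defs
begin

theorem proposition2p11:
  fixes \<Omega> :: "'a::euclidean_space set" and xs :: 'a and g :: "'a \<Rightarrow> real"
    and u :: "'a \<Rightarrow> real"
  assumes "open \<Omega>" and "connected \<Omega>" and "xs \<in> \<Omega>"
    and "star_shaped_set \<Omega> xs"
    and "continuous_on \<Omega> g"
    and "\<And>x. x \<in> \<Omega> \<Longrightarrow>
           u x = Sup {g y | y t. y = xs + t *\<^sub>R (x - xs) \<and> y \<in> \<Omega> \<and> t \<in> {0..1}}"
  shows "(\<forall>x\<in>\<Omega>. u x \<in> {g y | y t. y = xs + t *\<^sub>R (x - xs) \<and> y \<in> \<Omega> \<and> t \<in> {0..1}})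
         \<and> star_shaped_fun \<Omega> xs u
         \<and> (\<forall>x\<in>\<Omega>. u x = upper_ss_envelope \<Omega> xs g x)"
proof -
  define A where "A x = {g y | y t. y = xs + t *\<^sub>R (x - xs) \<and> y \<in> \<Omega> \<and> t \<in> {0..1::real}}" for x
  have seg: "xs + t *\<^sub>R (x - xs) \<in> \<Omega>" if "x \<in> \<Omega>" "t \<in> {0..1}" for x t
  proof -
    have h: "1 - t \<in> {0..1::real}" using that(2) by auto
    have "(1 - t) *\<^sub>R xs + (1 - (1 - t)) *\<^sub>R x \<in> \<Omega>"
      using assms(4)[unfolded star_shaped_set_def, rule_format, OF that(1) h] .
    moreover have "(1 - t) *\<^sub>R xs + (1 - (1 - t)) *\<^sub>R x = xs + t *\<^sub>R (x - xs)"
      by (simp add: algebra_simps)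
    ultimately show ?thesis by simp
  qed
  have Aimg: "A x = (\<lambda>t. g (xs + t *\<^sub>R (x - xs))) ` {0..1}" if "x \<in> \<Omega>" for x
  proof
    show "A x \<subseteq> (\<lambda>t. g (xs + t *\<^sub>R (x - xs))) ` {0..1}" unfolding A_def by blast
    show "(\<lambda>t. g (xs + t *\<^sub>R (x - xs))) ` {0..1} \<subseteq> A x"
    proof
      fix w assume "w \<in> (\<lambda>t. g (xs + t *\<^sub>R (x - xs))) ` {0..1}"
      then obtain t where t: "t \<in> {0..1}" "w = g (xs + t *\<^sub>R (x - xs))" by blast
      then show "w \<in> A x" unfolding A_def using seg[OF that t(1)] by blast
    qed
  qed
  have Acomp: "compact (A x)" if "x \<in> \<Omega>" for x
  proof -
    have "continuous_on {0..1} (\<lambda>t. xs + t *\<^sub>R (x - xs))"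
      by (intro continuous_intros)
    moreover have "(\<lambda>t. xs + t *\<^sub>R (x - xs)) ` {0..1} \<subseteq> \<Omega>" using seg[OF that] by auto
    ultimately have "continuous_on {0..1} (g \<circ> (\<lambda>t. xs + t *\<^sub>R (x - xs)))"
      using continuous_on_compose continuous_on_subset assms(5) by blast
    then have "compact ((g \<circ> (\<lambda>t. xs + t *\<^sub>R (x - xs))) ` {0..1})"
      by (intro compact_continuous_image) auto
    then show ?thesis using Aimg[OF that] by (simp add: image_comp)
  qed
  have Ane: "g x \<in> A x" if "x \<in> \<Omega>" for x
    unfolding A_def using that by (auto intro!: exI[of _ 1])
  have bdd: "bdd_above (A x)" if "x \<in> \<Omega>" for x
    using Acomp[OF that] by (simp add: compact_imp_bounded bounded_imp_bdd_above)
  have uA: "u x = Sup (A x)" if "x \<in> \<Omega>" for x using assms(6)[OF that] unfolding A_def by simp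
  have P1: "u x \<in> A x" if "x \<in> \<Omega>" for x
  proof -
    have "A x \<noteq> {}" using Ane[OF that] by blast
    then have "Sup (A x) \<in> A x"
      using closed_contains_Sup bdd[OF that] compact_imp_closed[OF Acomp[OF that]] by blast
    then show ?thesis using uA[OF that] by simp
  qed
  have gu: "g x \<le> u x" if "x \<in> \<Omega>" for x
    using uA[OF that] cSup_upper[OF Ane[OF that] bdd[OF that]] by simp
  have mono: "u (t *\<^sub>R xs + (1 - t) *\<^sub>R x) \<le> u x" "t *\<^sub>R xs + (1 - t) *\<^sub>R x \<in> \<Omega>"
    if "x \<in> \<Omega>" "t \<in> {0..1}" for x t
  proof -
    define z where "z = t *\<^sub>R xs + (1 - t) *\<^sub>R x"
    show zin: "t *\<^sub>R xs + (1 - t) *\<^sub>R x \<in> \<Omega>"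
      using assms(4)[unfolded star_shaped_set_def, rule_format, OF that(1) that(2)] .
    have "A z \<subseteq> A x"
    proof
      fix w assume "w \<in> A z"
      then obtain s where s: "s \<in> {0..1}" "w = g (xs + s *\<^sub>R (z - xs))"
        unfolding A_def by auto
      have eq: "xs + s *\<^sub>R (z - xs) = xs + (s * (1 - t)) *\<^sub>R (x - xs)"
        unfolding z_def by (simp add: algebra_simps)
      have "s * (1 - t) \<in> {0..1}" using s(1) that(2)
        by (auto simp: mult_le_one)
      then show "w \<in> A x" using s eq Aimg[OF that(1)] by (simp add: image_iff) (metis atLeastAtMost_iff)
    qed
    then have "Sup (A z) \<le> Sup (A x)"
      using Ane[OF zin[folded z_def]] bdd[OF that(1)] by (intro cSup_subset_mono) auto
    then show "u (t *\<^sub>R xs + (1 - t) *\<^sub>R x) \<le> u x"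
      using uA[OF that(1)] uA[OF zin] z_def by simp
  qed
  have SS: "star_shaped_fun \<Omega> xs u"
    unfolding star_shaped_fun_def star_shaped_set_def
  proof (intro allI ballI)
    fix \<alpha> :: real and x t assume x: "x \<in> {x \<in> \<Omega>. u x \<le> \<alpha>}" and t: "t \<in> {0..1::real}"
    then have "x \<in> \<Omega>" "u x \<le> \<alpha>" by auto
    then show "t *\<^sub>R xs + (1 - t) *\<^sub>R x \<in> {x \<in> \<Omega>. u x \<le> \<alpha>}"
      using mono[OF _ t] by (auto intro: order_trans)
  qed
  have env: "u x = upper_ss_envelope \<Omega> xs g x" if x: "x \<in> \<Omega>" for x
  proof -
    let ?V = "{v x | v. star_shaped_fun \<Omega> xs v \<and> (\<forall>y\<in>\<Omega>. g y \<le> v y)}"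
    have uin: "u x \<in> ?V" using SS gu by blast
    have bb: "bdd_below ?V"
    proof (rule bdd_belowI)
      fix w assume "w \<in> ?V"
      then show "g x \<le> w" using x by blast
    qed
    have low: "u x \<le> w" if "w \<in> ?V" for w
    proof -
      from that obtain v where v: "w = v x" "star_shaped_fun \<Omega> xs v" "\<forall>y\<in>\<Omega>. g y \<le> v y"
        by blast
      from P1[OF x] obtain t where t: "t \<in> {0..1}" "u x = g (xs + t *\<^sub>R (x - xs))"
        "xs + t *\<^sub>R (x - xs) \<in> \<Omega>"
        unfolding A_def by auto
      have "star_shaped_set {y\<in>\<Omega>. v y \<le> v x} xs" using v(2) unfolding star_shaped_fun_def by blast
      moreover have h: "1 - t \<in> {0..1::real}" using t(1) by auto
      moreover have "x \<in> {y\<in>\<Omega>. v y \<le> v x}" using x by simp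
      ultimately have "(1 - t) *\<^sub>R xs + (1 - (1 - t)) *\<^sub>R x \<in> {y\<in>\<Omega>. v y \<le> v x}"
        unfolding star_shaped_set_def by blast
      moreover have "(1 - t) *\<^sub>R xs + (1 - (1 - t)) *\<^sub>R x = xs + t *\<^sub>R (x - xs)"
        by (simp add: algebra_simps)
      ultimately have "v (xs + t *\<^sub>R (x - xs)) \<le> v x" by simp
      moreover have "g (xs + t *\<^sub>R (x - xs)) \<le> v (xs + t *\<^sub>R (x - xs))" using v(3) t(3) by blast
      ultimately show ?thesis using t(2) v(1) by linarith
    qed
    have "Inf ?V = u x"
    proof (rule antisym)
      show "Inf ?V \<le> u x" using cInf_lower[OF uin bb] .
      show "u x \<le> Inf ?V" using uin low by (intro cInf_greatest) auto
    qed
    then show ?thesis unfolding upper_ss_envelope_def by simp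
  qed
  show ?thesis using P1 SS env unfolding A_def by blast
qed

end
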